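(* Let $O$ be a split Cayley algebra over a field $F$ of characteristic $\neq2$, let $\mathfrak{H}$ be any collection of 4-dimensional associative subalgebras of $O$ and $\mathfrak{B}=\{\operatorname{im}(H):H\in\mathfrak{H}\}$. Then either some 2-dimensional subspace of $\operatorname{im}(O)$ of type M is contained in no element of $\mathfrak{B}$, or some 2-dimensional subspace of $\operatorname{im}(O)$ of type U is contained in more than one element of $\mathfrak{B}$. In particular no such $\mathfrak{B}$ is a $2$-$(7,3,1)$ subspace design on $\operatorname{im}(O)$.
   Context: Cayley algebra: $D_\gamma(D_\beta(D_\alpha(F)))$, $\alpha,\beta,\gamma\in F^\times$, with $D_\gamma(A)=A\oplus A$ (elements $a+ib$), $(a+ib)(c+id)=(ac+\gamma db^* )+i(a^*d+cb)$, $(a+ib)^*=a^*-ib$, starting from $F$ with identity involution; $\operatorname{im}(O)=\{a:a^*=-a\}$. Split: $O$ contains zero divisors. Nilpotent line: 1-dimensional subspace of nilpotent elements. A 2-dimensional $U\subseteq\operatorname{im}(O)$ is of type M if it contains exactly two nilpotent lines, and of type U if it contains exactly one nilpotent line $Fu$ and $uv\in Fu$ for all $v\in U$. A $2$-$(7,3,1)$ subspace design: 3-dimensional subspaces such that each 2-dimensional subspace lies in exactly one. *)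

theory Defs
  imports Complex_Main "HOL-Library.Product_Plus"
begin

text \<open>Iterated Cayley--Dickson doubling of a field F (type 'a) with the identity
  involution.  An element a + ib of D(A) is represented as the pair (a,b).
  Product rule: (a+ib)(c+id) = (ac + g d b^* ) + i(a^* d + c b),
  involution: (a+ib)^* = a^* - ib.  Additive structure is componentwise
  (Product_Plus).\<close>

type_synonym 'a cd1 = "'a \<times> 'a"
type_synonym 'a cd2 = "'a cd1 \<times> 'a cd1"
type_synonym 'a cd3 = "'a cd2 \<times> 'a cd2"

definition scale1 :: "'a::field \<Rightarrow> 'a cd1 \<Rightarrow> 'a cd1" where
  "scale1 k x = (k * fst x, k * snd x)"
definition conj1 :: "'a::field cd1 \<Rightarrow> 'a cd1" where
  "conj1 x = (fst x, - snd x)"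
definition mult1 :: "'a::field \<Rightarrow> 'a cd1 \<Rightarrow> 'a cd1 \<Rightarrow> 'a cd1" where
  "mult1 \<alpha> x y = (fst x * fst y + \<alpha> * (snd y * snd x), fst x * snd y + fst y * snd x)"

definition scale2 :: "'a::field \<Rightarrow> 'a cd2 \<Rightarrow> 'a cd2" where
  "scale2 k x = (scale1 k (fst x), scale1 k (snd x))"
definition conj2 :: "'a::field cd2 \<Rightarrow> 'a cd2" where
  "conj2 x = (conj1 (fst x), - snd x)"
definition mult2 :: "'a::field \<Rightarrow> 'a \<Rightarrow> 'a cd2 \<Rightarrow> 'a cd2 \<Rightarrow> 'a cd2" where
  "mult2 \<alpha> \<beta> x y =
     (mult1 \<alpha> (fst x) (fst y) + scale1 \<beta> (mult1 \<alpha> (snd y) (conj1 (snd x))),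
      mult1 \<alpha> (conj1 (fst x)) (snd y) + mult1 \<alpha> (fst y) (snd x))"

text \<open>Level 3: the Cayley algebra O = D_gamma(D_beta(D_alpha(F))).\<close>
definition scaleO :: "'a::field \<Rightarrow> 'a cd3 \<Rightarrow> 'a cd3" where
  "scaleO k x = (scale2 k (fst x), scale2 k (snd x))"
definition conjO :: "'a::field cd3 \<Rightarrow> 'a cd3" where
  "conjO x = (conj2 (fst x), - snd x)"
definition multO :: "'a::field \<Rightarrow> 'a \<Rightarrow> 'a \<Rightarrow> 'a cd3 \<Rightarrow> 'a cd3 \<Rightarrow> 'a cd3" where
  "multO \<alpha> \<beta> \<gamma> x y =
     (mult2 \<alpha> \<beta> (fst x) (fst y) + scale2 \<gamma> (mult2 \<alpha> \<beta> (snd y) (conj2 (snd x))),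
      mult2 \<alpha> \<beta> (conj2 (fst x)) (snd y) + mult2 \<alpha> \<beta> (fst y) (snd x))"
definition oneO :: "'a::field cd3" where
  "oneO = (((1, 0), (0, 0)), ((0, 0), (0, 0)))"

text \<open>Powers x^n (x^0 = 1, x^(n+1) = x * x^n; O is power-associative).\<close>
primrec powO :: "'a::field \<Rightarrow> 'a \<Rightarrow> 'a \<Rightarrow> 'a cd3 \<Rightarrow> nat \<Rightarrow> 'a cd3" where
  "powO \<alpha> \<beta> \<gamma> x 0 = oneO"
| "powO \<alpha> \<beta> \<gamma> x (Suc n) = multO \<alpha> \<beta> \<gamma> x (powO \<alpha> \<beta> \<gamma> x n)"

abbreviation subspO :: "'a::field cd3 set \<Rightarrow> bool" where
  "subspO U \<equiv> module.subspace scaleO U"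
abbreviation dimO :: "'a::field cd3 set \<Rightarrow> nat" where
  "dimO U \<equiv> vector_space.dim scaleO U"
abbreviation spanO :: "'a::field cd3 set \<Rightarrow> 'a cd3 set" where
  "spanO S \<equiv> module.span scaleO S"

definition split_cayley :: "'a::field \<Rightarrow> 'a \<Rightarrow> 'a \<Rightarrow> bool" where
  "split_cayley \<alpha> \<beta> \<gamma> \<longleftrightarrow>
     (\<exists>x y. x \<noteq> 0 \<and> y \<noteq> 0 \<and> multO \<alpha> \<beta> \<gamma> x y = 0)"

definition imO :: "'a::field cd3 set" where
  "imO = {a. conjO a = - a}"

definition nilpotentO :: "'a::field \<Rightarrow> 'a \<Rightarrow> 'a \<Rightarrow> 'a cd3 \<Rightarrow> bool" where
  "nilpotentO \<alpha> \<beta> \<gamma> x \<longleftrightarrow> (\<exists>n. powO \<alpha> \<beta> \<gamma> x n = 0)"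

definition nil_line :: "'a::field \<Rightarrow> 'a \<Rightarrow> 'a \<Rightarrow> 'a cd3 set \<Rightarrow> bool" where
  "nil_line \<alpha> \<beta> \<gamma> L \<longleftrightarrow> subspO L \<and> dimO L = 1 \<and> (\<forall>x\<in>L. nilpotentO \<alpha> \<beta> \<gamma> x)"

definition nil_lines_in :: "'a::field \<Rightarrow> 'a \<Rightarrow> 'a \<Rightarrow> 'a cd3 set \<Rightarrow> 'a cd3 set set" where
  "nil_lines_in \<alpha> \<beta> \<gamma> U = {L. nil_line \<alpha> \<beta> \<gamma> L \<and> L \<subseteq> U}"

definition plane_imO :: "'a::field cd3 set \<Rightarrow> bool" where
  "plane_imO U \<longleftrightarrow> subspO U \<and> dimO U = 2 \<and> U \<subseteq> imO"

definition typeM :: "'a::field \<Rightarrow> 'a \<Rightarrow> 'a \<Rightarrow> 'a cd3 set \<Rightarrow> bool" where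
  "typeM \<alpha> \<beta> \<gamma> U \<longleftrightarrow> plane_imO U \<and> card (nil_lines_in \<alpha> \<beta> \<gamma> U) = 2"

definition typeU :: "'a::field \<Rightarrow> 'a \<Rightarrow> 'a \<Rightarrow> 'a cd3 set \<Rightarrow> bool" where
  "typeU \<alpha> \<beta> \<gamma> U \<longleftrightarrow> plane_imO U \<and>
     (\<exists>u. u \<noteq> 0 \<and> nil_lines_in \<alpha> \<beta> \<gamma> U = {spanO {u}} \<and>
          (\<forall>v\<in>U. multO \<alpha> \<beta> \<gamma> u v \<in> spanO {u}))"

definition assoc_subalg4 :: "'a::field \<Rightarrow> 'a \<Rightarrow> 'a \<Rightarrow> 'a cd3 set \<Rightarrow> bool" where
  "assoc_subalg4 \<alpha> \<beta> \<gamma> H \<longleftrightarrow> subspO H \<and> dimO H = 4 \<and> oneO \<in> H \<and>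
     (\<forall>x\<in>H. \<forall>y\<in>H. multO \<alpha> \<beta> \<gamma> x y \<in> H) \<and>
     (\<forall>x\<in>H. \<forall>y\<in>H. \<forall>z\<in>H.
        multO \<alpha> \<beta> \<gamma> (multO \<alpha> \<beta> \<gamma> x y) z = multO \<alpha> \<beta> \<gamma> x (multO \<alpha> \<beta> \<gamma> y z))"

definition imH :: "'a::field cd3 set \<Rightarrow> 'a cd3 set" where
  "imH H = H \<inter> imO"

definition subspace_design_2_3_1 :: "'a::field cd3 set \<Rightarrow> 'a cd3 set set \<Rightarrow> bool" where
  "subspace_design_2_3_1 V \<B> \<longleftrightarrow>
     (\<forall>B\<in>\<B>. subspO B \<and> dimO B = 3 \<and> B \<subseteq> V) \<and>
     (\<forall>U. subspO U \<and> dimO U = 2 \<and> U \<subseteq> V \<longrightarrow> (\<exists>!B. B \<in> \<B> \<and> U \<subseteq> B))"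

end

theory Submission imports Defs begin

definition mk8 :: "'a::field \<Rightarrow> 'a \<Rightarrow> 'a \<Rightarrow> 'a \<Rightarrow> 'a \<Rightarrow> 'a \<Rightarrow> 'a \<Rightarrow> 'a \<Rightarrow> 'a cd3" where
 "mk8 a0 a1 a2 a3 a4 a5 a6 a7 = (((a0,a1),(a2,a3)),((a4,a5),(a6,a7)))"
lemma mk8_ex: "\<exists>a0 a1 a2 a3 a4 a5 a6 a7. x = mk8 a0 a1 a2 a3 a4 a5 a6 a7"
  unfolding mk8_def by (cases x) auto
declare split_paired_All[simp del] split_paired_Ex[simp del]

lemmas defs = multO_def mult2_def mult1_def scale1_def scale2_def conj1_def conj2_def conjO_def scaleO_def oneO_def mk8_def

definition nO :: "'a::field \<Rightarrow> 'a \<Rightarrow> 'a \<Rightarrow> 'a cd3 \<Rightarrow> 'a" where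
 "nO al be ga x = (case x of (((a0,a1),(a2,a3)),((a4,a5),(a6,a7))) \<Rightarrow>
    a0*a0 - al*a1*a1 - be*(a2*a2 - al*a3*a3) - ga*(a4*a4 - al*a5*a5 - be*(a6*a6 - al*a7*a7)))"
definition bO :: "'a::field \<Rightarrow> 'a \<Rightarrow> 'a \<Rightarrow> 'a cd3 \<Rightarrow> 'a cd3 \<Rightarrow> 'a" where
 "bO al be ga x y = nO al be ga (x+y) - nO al be ga x - nO al be ga y"
definition re :: "'a::field cd3 \<Rightarrow> 'a" where "re x = fst (fst (fst x))"

interpretation V: vector_space "scaleO :: 'a::field \<Rightarrow> 'a cd3 \<Rightarrow> 'a cd3"
proof
  fix a b :: 'a and x y :: "'a cd3"
  show "scaleO a (x + y) = scaleO a x + scaleO a y" by (simp add: defs algebra_simps)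
  show "scaleO (a + b) x = scaleO a x + scaleO b x" by (simp add: defs algebra_simps)
  show "scaleO a (scaleO b x) = scaleO (a * b) x" by (simp add: defs algebra_simps)
  show "scaleO 1 x = x" by (simp add: defs)
qed



lemma imO_iff: assumes "(2::'a::field) \<noteq> 0" shows "(x::'a cd3) \<in> imO \<longleftrightarrow> re x = 0"
proof -
  obtain a0 a1 a2 a3 a4 a5 a6 a7 where x: "x = mk8 a0 a1 a2 a3 a4 a5 a6 a7" using mk8_ex by blast
  show ?thesis unfolding x imO_def using assms by (simp add: defs re_def)
qed

lemma span1: "x \<in> V.span {p} \<longleftrightarrow> (\<exists>a. x = scaleO a p)"
  unfolding V.span_singleton by blast

lemma span2: "x \<in> V.span {p, q} \<longleftrightarrow> (\<exists>a b. x = scaleO a p + scaleO b q)"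
proof
  assume "x \<in> V.span {p, q}"
  then obtain k where "x - scaleO k p \<in> V.span {q}" using V.span_breakdown_eq by blast
  then obtain c where "x - scaleO k p = scaleO c q" using span1 by blast
  then have "x = scaleO k p + scaleO c q" by (simp add: algebra_simps)
  then show "\<exists>a b. x = scaleO a p + scaleO b q" by blast
next
  assume "\<exists>a b. x = scaleO a p + scaleO b q"
  then obtain a c where x: "x = scaleO a p + scaleO c q" by blast
  then have "x - scaleO a p = scaleO c q" by simp
  then have "x - scaleO a p \<in> V.span {q}" using span1 by blast
  then show "x \<in> V.span {p, q}" using V.span_breakdown_eq by blast
qed

lemma dim1: assumes "V.subspace L" "V.dim L = 1" shows "\<exists>v. v \<noteq> 0 \<and> L = V.span {v}"
proof -
  obtain Bs where Bs: "Bs \<subseteq> L" "V.independent Bs" "L \<subseteq> V.span Bs" "card Bs = V.dim L"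
    by (rule V.basis_exists)
  have "card Bs = 1" using Bs(4) assms(2) by simp
  then obtain v where v: "Bs = {v}" by (rule card_1_singletonE)
  have "v \<noteq> 0"
  proof
    assume "v = 0" then have "V.dependent Bs" using v V.dependent_zero by simp
    then show False using Bs(2) by simp
  qed
  moreover have "L = V.span {v}"
  proof (rule equalityI)
    show "L \<subseteq> V.span {v}" using Bs(3) v by simp
    show "V.span {v} \<subseteq> L" using V.span_minimal[of "{v}" L] Bs(1) v assms(1) by simp
  qed
  ultimately show ?thesis by blast
qed

lemma line_span: assumes "v \<noteq> 0" shows "V.subspace (V.span {v}) \<and> V.dim (V.span {v}) = 1"
proof -
  have "V.independent {v}" using assms by (intro V.independent_insertI) (simp_all add: V.independent_empty)
  then show ?thesis using V.dim_span_eq_card_independent[of "{v}"] by simp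
qed



context fixes al be ga :: "'a::field"
begin

abbreviation "M \<equiv> multO al be ga"
abbreviation "N \<equiv> nO al be ga"
abbreviation "B \<equiv> bO al be ga"

lemma mul_add_r: "M x (y + z) = M x y + M x z"
proof -
  obtain a0 a1 a2 a3 a4 a5 a6 a7 where x: "x = mk8 a0 a1 a2 a3 a4 a5 a6 a7" using mk8_ex by blast
  obtain b0 b1 b2 b3 b4 b5 b6 b7 where y: "y = mk8 b0 b1 b2 b3 b4 b5 b6 b7" using mk8_ex by blast
  obtain c0 c1 c2 c3 c4 c5 c6 c7 where z: "z = mk8 c0 c1 c2 c3 c4 c5 c6 c7" using mk8_ex by blast
  show ?thesis unfolding x y z by (simp add: defs nO_def bO_def re_def; algebra)
qed

lemma mul_add_l: "M (y + z) x = M y x + M z x"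
proof -
  obtain a0 a1 a2 a3 a4 a5 a6 a7 where x: "x = mk8 a0 a1 a2 a3 a4 a5 a6 a7" using mk8_ex by blast
  obtain b0 b1 b2 b3 b4 b5 b6 b7 where y: "y = mk8 b0 b1 b2 b3 b4 b5 b6 b7" using mk8_ex by blast
  obtain c0 c1 c2 c3 c4 c5 c6 c7 where z: "z = mk8 c0 c1 c2 c3 c4 c5 c6 c7" using mk8_ex by blast
  show ?thesis unfolding x y z by (simp add: defs nO_def bO_def re_def; algebra)
qed

lemma mul_sc_r: "M x (scaleO c y) = scaleO c (M x y)"
proof -
  obtain a0 a1 a2 a3 a4 a5 a6 a7 where x: "x = mk8 a0 a1 a2 a3 a4 a5 a6 a7" using mk8_ex by blast
  obtain b0 b1 b2 b3 b4 b5 b6 b7 where y: "y = mk8 b0 b1 b2 b3 b4 b5 b6 b7" using mk8_ex by blast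
  show ?thesis unfolding x y by (simp add: defs nO_def bO_def re_def; algebra)
qed

lemma mul_sc_l: "M (scaleO c x) y = scaleO c (M x y)"
proof -
  obtain a0 a1 a2 a3 a4 a5 a6 a7 where x: "x = mk8 a0 a1 a2 a3 a4 a5 a6 a7" using mk8_ex by blast
  obtain b0 b1 b2 b3 b4 b5 b6 b7 where y: "y = mk8 b0 b1 b2 b3 b4 b5 b6 b7" using mk8_ex by blast
  show ?thesis unfolding x y by (simp add: defs nO_def bO_def re_def; algebra)
qed

lemma mul_one_l: "M oneO x = x"
proof -
  obtain a0 a1 a2 a3 a4 a5 a6 a7 where x: "x = mk8 a0 a1 a2 a3 a4 a5 a6 a7" using mk8_ex by blast
  show ?thesis unfolding x by (simp add: defs nO_def bO_def re_def; algebra)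
qed

lemma mul_one_r: "M x oneO = x"
proof -
  obtain a0 a1 a2 a3 a4 a5 a6 a7 where x: "x = mk8 a0 a1 a2 a3 a4 a5 a6 a7" using mk8_ex by blast
  show ?thesis unfolding x by (simp add: defs nO_def bO_def re_def; algebra)
qed

lemma conj_mul: "conjO (M x y) = M (conjO y) (conjO x)"
proof -
  obtain a0 a1 a2 a3 a4 a5 a6 a7 where x: "x = mk8 a0 a1 a2 a3 a4 a5 a6 a7" using mk8_ex by blast
  obtain b0 b1 b2 b3 b4 b5 b6 b7 where y: "y = mk8 b0 b1 b2 b3 b4 b5 b6 b7" using mk8_ex by blast
  show ?thesis unfolding x y by (simp add: defs nO_def bO_def re_def; algebra)
qed

lemma alt_l: "M x (M x y) = M (M x x) y"
proof -
  obtain a0 a1 a2 a3 a4 a5 a6 a7 where x: "x = mk8 a0 a1 a2 a3 a4 a5 a6 a7" using mk8_ex by blast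
  obtain b0 b1 b2 b3 b4 b5 b6 b7 where y: "y = mk8 b0 b1 b2 b3 b4 b5 b6 b7" using mk8_ex by blast
  show ?thesis unfolding x y by (simp add: defs nO_def bO_def re_def; algebra)
qed

lemma I14: "M (conjO x) (M x y) = scaleO (N x) y"
proof -
  obtain a0 a1 a2 a3 a4 a5 a6 a7 where x: "x = mk8 a0 a1 a2 a3 a4 a5 a6 a7" using mk8_ex by blast
  obtain b0 b1 b2 b3 b4 b5 b6 b7 where y: "y = mk8 b0 b1 b2 b3 b4 b5 b6 b7" using mk8_ex by blast
  show ?thesis unfolding x y by (simp add: defs nO_def bO_def re_def; algebra)
qed

lemma I13: "M (M x y) (conjO y) = scaleO (N y) x"
proof -
  obtain a0 a1 a2 a3 a4 a5 a6 a7 where x: "x = mk8 a0 a1 a2 a3 a4 a5 a6 a7" using mk8_ex by blast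
  obtain b0 b1 b2 b3 b4 b5 b6 b7 where y: "y = mk8 b0 b1 b2 b3 b4 b5 b6 b7" using mk8_ex by blast
  show ?thesis unfolding x y by (simp add: defs nO_def bO_def re_def; algebra)
qed

lemma N_mul: "N (M x y) = N x * N y"
proof -
  obtain a0 a1 a2 a3 a4 a5 a6 a7 where x: "x = mk8 a0 a1 a2 a3 a4 a5 a6 a7" using mk8_ex by blast
  obtain b0 b1 b2 b3 b4 b5 b6 b7 where y: "y = mk8 b0 b1 b2 b3 b4 b5 b6 b7" using mk8_ex by blast
  show ?thesis unfolding x y by (simp add: defs nO_def bO_def re_def; algebra)
qed

lemma B_mul: "B (M x y) w = B y (M (conjO x) w)"
proof -
  obtain a0 a1 a2 a3 a4 a5 a6 a7 where x: "x = mk8 a0 a1 a2 a3 a4 a5 a6 a7" using mk8_ex by blast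
  obtain b0 b1 b2 b3 b4 b5 b6 b7 where y: "y = mk8 b0 b1 b2 b3 b4 b5 b6 b7" using mk8_ex by blast
  obtain d0 d1 d2 d3 d4 d5 d6 d7 where w: "w = mk8 d0 d1 d2 d3 d4 d5 d6 d7" using mk8_ex by blast
  show ?thesis unfolding x y w by (simp add: defs nO_def bO_def re_def; algebra)
qed

lemma B_mulr: "B (M y x) (M z x) = N x * B y z"
proof -
  obtain a0 a1 a2 a3 a4 a5 a6 a7 where x: "x = mk8 a0 a1 a2 a3 a4 a5 a6 a7" using mk8_ex by blast
  obtain b0 b1 b2 b3 b4 b5 b6 b7 where y: "y = mk8 b0 b1 b2 b3 b4 b5 b6 b7" using mk8_ex by blast
  obtain c0 c1 c2 c3 c4 c5 c6 c7 where z: "z = mk8 c0 c1 c2 c3 c4 c5 c6 c7" using mk8_ex by blast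
  show ?thesis unfolding x y z by (simp add: defs nO_def bO_def re_def; algebra)
qed

lemma B_mull: "B (M x y) (M x z) = N x * B y z"
proof -
  obtain a0 a1 a2 a3 a4 a5 a6 a7 where x: "x = mk8 a0 a1 a2 a3 a4 a5 a6 a7" using mk8_ex by blast
  obtain b0 b1 b2 b3 b4 b5 b6 b7 where y: "y = mk8 b0 b1 b2 b3 b4 b5 b6 b7" using mk8_ex by blast
  obtain c0 c1 c2 c3 c4 c5 c6 c7 where z: "z = mk8 c0 c1 c2 c3 c4 c5 c6 c7" using mk8_ex by blast
  show ?thesis unfolding x y z by (simp add: defs nO_def bO_def re_def; algebra)
qed

lemma sq: assumes "re x = 0" shows "M x x = scaleO (- N x) oneO"
proof -
  obtain a0 a1 a2 a3 a4 a5 a6 a7 where x: "x = mk8 a0 a1 a2 a3 a4 a5 a6 a7" using mk8_ex by blast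
  have im: "a0 = 0" using assms x by (simp_all add: mk8_def re_def)
  show ?thesis unfolding x im by (simp add: defs nO_def bO_def re_def; algebra)
qed

lemma anti: assumes "re x = 0" "re y = 0" shows "M x y + M y x = scaleO (- B x y) oneO"
proof -
  obtain a0 a1 a2 a3 a4 a5 a6 a7 where x: "x = mk8 a0 a1 a2 a3 a4 a5 a6 a7" using mk8_ex by blast
  obtain b0 b1 b2 b3 b4 b5 b6 b7 where y: "y = mk8 b0 b1 b2 b3 b4 b5 b6 b7" using mk8_ex by blast
  have im: "a0 = 0" "b0 = 0" using assms x y by (simp_all add: mk8_def re_def)
  show ?thesis unfolding x y im by (simp add: defs nO_def bO_def re_def; algebra)
qed

lemma flex: assumes "re x = 0" "re y = 0" shows "M x (M y x) = scaleO (- B x y) x + scaleO (N x) y"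
proof -
  obtain a0 a1 a2 a3 a4 a5 a6 a7 where x: "x = mk8 a0 a1 a2 a3 a4 a5 a6 a7" using mk8_ex by blast
  obtain b0 b1 b2 b3 b4 b5 b6 b7 where y: "y = mk8 b0 b1 b2 b3 b4 b5 b6 b7" using mk8_ex by blast
  have im: "a0 = 0" "b0 = 0" using assms x y by (simp_all add: mk8_def re_def)
  show ?thesis unfolding x y im by (simp add: defs nO_def bO_def re_def; algebra)
qed

lemma Nh: assumes "re x = 0" "re y = 0" shows "N (M x y - M y x) = 4 * N x * N y - (B x y)^2"
proof -
  obtain a0 a1 a2 a3 a4 a5 a6 a7 where x: "x = mk8 a0 a1 a2 a3 a4 a5 a6 a7" using mk8_ex by blast
  obtain b0 b1 b2 b3 b4 b5 b6 b7 where y: "y = mk8 b0 b1 b2 b3 b4 b5 b6 b7" using mk8_ex by blast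
  have im: "a0 = 0" "b0 = 0" using assms x y by (simp_all add: mk8_def re_def)
  show ?thesis unfolding x y im by (simp add: defs nO_def bO_def re_def; algebra)
qed

lemma comm_re: assumes "re x = 0" "re y = 0" shows "re (M x y - M y x) = 0"
proof -
  obtain a0 a1 a2 a3 a4 a5 a6 a7 where x: "x = mk8 a0 a1 a2 a3 a4 a5 a6 a7" using mk8_ex by blast
  obtain b0 b1 b2 b3 b4 b5 b6 b7 where y: "y = mk8 b0 b1 b2 b3 b4 b5 b6 b7" using mk8_ex by blast
  have im: "a0 = 0" "b0 = 0" using assms x y by (simp_all add: mk8_def re_def)
  show ?thesis unfolding x y im by (simp add: defs nO_def bO_def re_def; algebra)
qed

lemma conj_im: assumes "re x = 0" shows "conjO x = - x"
proof -
  obtain a0 a1 a2 a3 a4 a5 a6 a7 where x: "x = mk8 a0 a1 a2 a3 a4 a5 a6 a7" using mk8_ex by blast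
  have im: "a0 = 0" using assms x by (simp_all add: mk8_def re_def)
  show ?thesis unfolding x im by (simp add: defs nO_def bO_def re_def; algebra)
qed

lemma conj_re: "conjO x = scaleO (2 * re x) oneO - x"
proof -
  obtain a0 a1 a2 a3 a4 a5 a6 a7 where x: "x = mk8 a0 a1 a2 a3 a4 a5 a6 a7" using mk8_ex by blast
  show ?thesis unfolding x by (simp add: defs nO_def bO_def re_def; algebra)
qed

lemma conj_zero: "conjO (0::'a cd3) = 0"
proof -
  show ?thesis by (simp add: defs nO_def bO_def re_def zero_prod_def)
qed

lemma B_x_mul: "B x (M x y) = 2 * N x * re y"
proof -
  obtain a0 a1 a2 a3 a4 a5 a6 a7 where x: "x = mk8 a0 a1 a2 a3 a4 a5 a6 a7" using mk8_ex by blast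
  obtain b0 b1 b2 b3 b4 b5 b6 b7 where y: "y = mk8 b0 b1 b2 b3 b4 b5 b6 b7" using mk8_ex by blast
  show ?thesis unfolding x y by (simp add: defs nO_def bO_def re_def; algebra)
qed

lemma B_x_mulr: "B x (M y x) = 2 * N x * re y"
proof -
  obtain a0 a1 a2 a3 a4 a5 a6 a7 where x: "x = mk8 a0 a1 a2 a3 a4 a5 a6 a7" using mk8_ex by blast
  obtain b0 b1 b2 b3 b4 b5 b6 b7 where y: "y = mk8 b0 b1 b2 b3 b4 b5 b6 b7" using mk8_ex by blast
  show ?thesis unfolding x y by (simp add: defs nO_def bO_def re_def; algebra)
qed

lemma B_one: "B x oneO = 2 * re x"
proof -
  obtain a0 a1 a2 a3 a4 a5 a6 a7 where x: "x = mk8 a0 a1 a2 a3 a4 a5 a6 a7" using mk8_ex by blast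
  show ?thesis unfolding x by (simp add: defs nO_def bO_def re_def; algebra)
qed

lemma B_sym: "B x y = B y x"
proof -
  obtain a0 a1 a2 a3 a4 a5 a6 a7 where x: "x = mk8 a0 a1 a2 a3 a4 a5 a6 a7" using mk8_ex by blast
  obtain b0 b1 b2 b3 b4 b5 b6 b7 where y: "y = mk8 b0 b1 b2 b3 b4 b5 b6 b7" using mk8_ex by blast
  show ?thesis unfolding x y by (simp add: defs nO_def bO_def re_def; algebra)
qed

lemma B_add: "B (x + y) z = B x z + B y z"
proof -
  obtain a0 a1 a2 a3 a4 a5 a6 a7 where x: "x = mk8 a0 a1 a2 a3 a4 a5 a6 a7" using mk8_ex by blast
  obtain b0 b1 b2 b3 b4 b5 b6 b7 where y: "y = mk8 b0 b1 b2 b3 b4 b5 b6 b7" using mk8_ex by blast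
  obtain c0 c1 c2 c3 c4 c5 c6 c7 where z: "z = mk8 c0 c1 c2 c3 c4 c5 c6 c7" using mk8_ex by blast
  show ?thesis unfolding x y z by (simp add: defs nO_def bO_def re_def; algebra)
qed

lemma B_diff: "B (x - y) z = B x z - B y z"
proof -
  obtain a0 a1 a2 a3 a4 a5 a6 a7 where x: "x = mk8 a0 a1 a2 a3 a4 a5 a6 a7" using mk8_ex by blast
  obtain b0 b1 b2 b3 b4 b5 b6 b7 where y: "y = mk8 b0 b1 b2 b3 b4 b5 b6 b7" using mk8_ex by blast
  obtain c0 c1 c2 c3 c4 c5 c6 c7 where z: "z = mk8 c0 c1 c2 c3 c4 c5 c6 c7" using mk8_ex by blast
  show ?thesis unfolding x y z by (simp add: defs nO_def bO_def re_def; algebra)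
qed

lemma B_sc: "B (scaleO c x) z = c * B x z"
proof -
  obtain a0 a1 a2 a3 a4 a5 a6 a7 where x: "x = mk8 a0 a1 a2 a3 a4 a5 a6 a7" using mk8_ex by blast
  obtain c0 c1 c2 c3 c4 c5 c6 c7 where z: "z = mk8 c0 c1 c2 c3 c4 c5 c6 c7" using mk8_ex by blast
  show ?thesis unfolding x z by (simp add: defs nO_def bO_def re_def; algebra)
qed

lemma B_self: "B x x = 2 * N x"
proof -
  obtain a0 a1 a2 a3 a4 a5 a6 a7 where x: "x = mk8 a0 a1 a2 a3 a4 a5 a6 a7" using mk8_ex by blast
  show ?thesis unfolding x by (simp add: defs nO_def bO_def re_def; algebra)
qed

lemma N_sc: "N (scaleO c x) = c^2 * N x"
proof -
  obtain a0 a1 a2 a3 a4 a5 a6 a7 where x: "x = mk8 a0 a1 a2 a3 a4 a5 a6 a7" using mk8_ex by blast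
  show ?thesis unfolding x by (simp add: defs nO_def bO_def re_def; algebra)
qed

lemma re_add: "re (x + y) = re x + re y"
proof -
  obtain a0 a1 a2 a3 a4 a5 a6 a7 where x: "x = mk8 a0 a1 a2 a3 a4 a5 a6 a7" using mk8_ex by blast
  obtain b0 b1 b2 b3 b4 b5 b6 b7 where y: "y = mk8 b0 b1 b2 b3 b4 b5 b6 b7" using mk8_ex by blast
  show ?thesis unfolding x y by (simp add: defs nO_def bO_def re_def; algebra)
qed

lemma re_diff: "re (x - y) = re x - re y"
proof -
  obtain a0 a1 a2 a3 a4 a5 a6 a7 where x: "x = mk8 a0 a1 a2 a3 a4 a5 a6 a7" using mk8_ex by blast
  obtain b0 b1 b2 b3 b4 b5 b6 b7 where y: "y = mk8 b0 b1 b2 b3 b4 b5 b6 b7" using mk8_ex by blast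
  show ?thesis unfolding x y by (simp add: defs nO_def bO_def re_def; algebra)
qed

lemma re_sc: "re (scaleO c x) = c * re x"
proof -
  obtain a0 a1 a2 a3 a4 a5 a6 a7 where x: "x = mk8 a0 a1 a2 a3 a4 a5 a6 a7" using mk8_ex by blast
  show ?thesis unfolding x by (simp add: defs nO_def bO_def re_def; algebra)
qed

lemma re_one: "re (oneO::'a cd3) = 1"
proof -
  show ?thesis by (simp add: defs nO_def bO_def re_def zero_prod_def)
qed

lemma N_one: "N oneO = 1"
proof -
  show ?thesis by (simp add: defs nO_def bO_def re_def zero_prod_def)
qed

lemma B_neg: "B (- x) z = - B x z"
proof -
  obtain a0 a1 a2 a3 a4 a5 a6 a7 where x: "x = mk8 a0 a1 a2 a3 a4 a5 a6 a7" using mk8_ex by blast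
  obtain c0 c1 c2 c3 c4 c5 c6 c7 where z: "z = mk8 c0 c1 c2 c3 c4 c5 c6 c7" using mk8_ex by blast
  show ?thesis unfolding x z by (simp add: defs nO_def bO_def re_def; algebra)
qed

lemma re_neg: "re (- x) = - re x"
proof -
  obtain a0 a1 a2 a3 a4 a5 a6 a7 where x: "x = mk8 a0 a1 a2 a3 a4 a5 a6 a7" using mk8_ex by blast
  show ?thesis unfolding x by (simp add: defs nO_def bO_def re_def; algebra)
qed

lemma mul_zero_l: "M 0 x = 0"
proof -
  obtain a0 a1 a2 a3 a4 a5 a6 a7 where x: "x = mk8 a0 a1 a2 a3 a4 a5 a6 a7" using mk8_ex by blast
  show ?thesis unfolding x by (simp add: defs nO_def bO_def re_def zero_prod_def; algebra)
qed

lemma mul_zero_r: "M x 0 = 0"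
proof -
  obtain a0 a1 a2 a3 a4 a5 a6 a7 where x: "x = mk8 a0 a1 a2 a3 a4 a5 a6 a7" using mk8_ex by blast
  show ?thesis unfolding x by (simp add: defs nO_def bO_def re_def zero_prod_def; algebra)
qed

lemma mul_neg_l: "M (- x) y = - M x y"
proof -
  obtain a0 a1 a2 a3 a4 a5 a6 a7 where x: "x = mk8 a0 a1 a2 a3 a4 a5 a6 a7" using mk8_ex by blast
  obtain b0 b1 b2 b3 b4 b5 b6 b7 where y: "y = mk8 b0 b1 b2 b3 b4 b5 b6 b7" using mk8_ex by blast
  show ?thesis unfolding x y by (simp add: defs nO_def bO_def re_def; algebra)
qed

lemma mul_neg_r: "M x (- y) = - M x y"
proof -
  obtain a0 a1 a2 a3 a4 a5 a6 a7 where x: "x = mk8 a0 a1 a2 a3 a4 a5 a6 a7" using mk8_ex by blast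
  obtain b0 b1 b2 b3 b4 b5 b6 b7 where y: "y = mk8 b0 b1 b2 b3 b4 b5 b6 b7" using mk8_ex by blast
  show ?thesis unfolding x y by (simp add: defs nO_def bO_def re_def; algebra)
qed

lemma mul_diff_r: "M x (y - z) = M x y - M x z"
proof -
  obtain a0 a1 a2 a3 a4 a5 a6 a7 where x: "x = mk8 a0 a1 a2 a3 a4 a5 a6 a7" using mk8_ex by blast
  obtain b0 b1 b2 b3 b4 b5 b6 b7 where y: "y = mk8 b0 b1 b2 b3 b4 b5 b6 b7" using mk8_ex by blast
  obtain c0 c1 c2 c3 c4 c5 c6 c7 where z: "z = mk8 c0 c1 c2 c3 c4 c5 c6 c7" using mk8_ex by blast
  show ?thesis unfolding x y z by (simp add: defs nO_def bO_def re_def; algebra)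
qed

lemma mul_diff_l: "M (y - z) x = M y x - M z x"
proof -
  obtain a0 a1 a2 a3 a4 a5 a6 a7 where x: "x = mk8 a0 a1 a2 a3 a4 a5 a6 a7" using mk8_ex by blast
  obtain b0 b1 b2 b3 b4 b5 b6 b7 where y: "y = mk8 b0 b1 b2 b3 b4 b5 b6 b7" using mk8_ex by blast
  obtain c0 c1 c2 c3 c4 c5 c6 c7 where z: "z = mk8 c0 c1 c2 c3 c4 c5 c6 c7" using mk8_ex by blast
  show ?thesis unfolding x y z by (simp add: defs nO_def bO_def re_def; algebra)
qed

lemma N_zero: "N 0 = 0"
proof -
  show ?thesis by (simp add: defs nO_def bO_def re_def zero_prod_def)
qed



lemma B_sc_r: "B x (scaleO c y) = c * B x y"
proof -
  obtain a0 a1 a2 a3 a4 a5 a6 a7 where x: "x = mk8 a0 a1 a2 a3 a4 a5 a6 a7" using mk8_ex by blast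
  obtain b0 b1 b2 b3 b4 b5 b6 b7 where y: "y = mk8 b0 b1 b2 b3 b4 b5 b6 b7" using mk8_ex by blast
  show ?thesis unfolding x y by (simp add: defs nO_def bO_def re_def; algebra)
qed

lemma B_add_r: "B x (y + z) = B x y + B x z"
proof -
  obtain a0 a1 a2 a3 a4 a5 a6 a7 where x: "x = mk8 a0 a1 a2 a3 a4 a5 a6 a7" using mk8_ex by blast
  obtain b0 b1 b2 b3 b4 b5 b6 b7 where y: "y = mk8 b0 b1 b2 b3 b4 b5 b6 b7" using mk8_ex by blast
  obtain c0 c1 c2 c3 c4 c5 c6 c7 where z: "z = mk8 c0 c1 c2 c3 c4 c5 c6 c7" using mk8_ex by blast
  show ?thesis unfolding x y z by (simp add: defs nO_def bO_def re_def; algebra)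
qed

lemma B_diff_r: "B x (y - z) = B x y - B x z"
proof -
  obtain a0 a1 a2 a3 a4 a5 a6 a7 where x: "x = mk8 a0 a1 a2 a3 a4 a5 a6 a7" using mk8_ex by blast
  obtain b0 b1 b2 b3 b4 b5 b6 b7 where y: "y = mk8 b0 b1 b2 b3 b4 b5 b6 b7" using mk8_ex by blast
  obtain c0 c1 c2 c3 c4 c5 c6 c7 where z: "z = mk8 c0 c1 c2 c3 c4 c5 c6 c7" using mk8_ex by blast
  show ?thesis unfolding x y z by (simp add: defs nO_def bO_def re_def; algebra)
qed

lemma B_neg_r: "B x (- y) = - B x y"
proof -
  obtain a0 a1 a2 a3 a4 a5 a6 a7 where x: "x = mk8 a0 a1 a2 a3 a4 a5 a6 a7" using mk8_ex by blast
  obtain b0 b1 b2 b3 b4 b5 b6 b7 where y: "y = mk8 b0 b1 b2 b3 b4 b5 b6 b7" using mk8_ex by blast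
  show ?thesis unfolding x y by (simp add: defs nO_def bO_def re_def; algebra)
qed

lemma B_zero_r: "B x 0 = 0"
proof -
  obtain a0 a1 a2 a3 a4 a5 a6 a7 where x: "x = mk8 a0 a1 a2 a3 a4 a5 a6 a7" using mk8_ex by blast
  show ?thesis unfolding x by (simp add: defs nO_def bO_def re_def zero_prod_def)
qed

lemma re_zero: "re (0::'a::field cd3) = 0" by (simp add: re_def)
lemma one_nz: "(oneO::'a::field cd3) \<noteq> 0" by (simp add: oneO_def zero_prod_def)
lemma N_add: "N (x + y) = N x + N y + B x y" by (simp add: bO_def)

lemma subspace_imO: assumes "(2::'a::field) \<noteq> 0" shows "V.subspace (imO :: 'a cd3 set)"
  by (intro V.subspaceI) (simp_all add: imO_iff[OF assms] re_add re_sc re_zero)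


lemma B_zero: "B 0 w = 0" using B_sc[of 0 0 w] by simp

lemma B_span_zero: assumes "\<forall>s\<in>S. B s w = 0" "x \<in> V.span S" shows "B x w = 0"
proof -
  have sub: "V.subspace {x. B x w = 0}"
    by (intro V.subspaceI) (simp_all add: B_zero B_add B_sc)
  have "S \<subseteq> {x. B x w = 0}" using assms(1) by (simp add: subset_eq)
  then have "V.span S \<subseteq> {x. B x w = 0}" using sub by (rule V.span_minimal)
  then have "x \<in> {x. B x w = 0}" using assms(2) by (rule subsetD)
  then show ?thesis by simp
qed

lemma indep_step: assumes "V.independent S" "\<forall>s\<in>S. B s w = 0" "B a w \<noteq> 0"
  shows "V.independent (insert a S) \<and> a \<notin> S"
proof -
  have nsp: "a \<notin> V.span S"
  proof
    assume "a \<in> V.span S" then have "B a w = 0" using B_span_zero[OF assms(2)] by simp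
    then show False using assms(3) by simp
  qed
  have "a \<notin> S"
  proof
    assume "a \<in> S" then have "a \<in> V.span S" by (rule V.span_base)
    then show False using nsp by simp
  qed
  then show ?thesis using V.independent_insertI[OF nsp assms(1)] by simp
qed

lemma pow_im: assumes "re x = 0"
  shows "powO al be ga x (2*k) = scaleO ((- N x)^k) oneO \<and> powO al be ga x (2*k+1) = scaleO ((- N x)^k) x"
proof (induction k)
  case 0 then show ?case by (simp add: mul_one_r)
next
  case (Suc k)
  have o: "powO al be ga x (2*k+1) = scaleO ((- N x)^k) x" using Suc by blast
  have "powO al be ga x (2 * Suc k) = M x (powO al be ga x (2*k+1))" by simp
  also have "\<dots> = scaleO ((- N x)^k) (M x x)" using o by (simp add: mul_sc_r)
  also have "\<dots> = scaleO ((- N x)^Suc k) oneO" using sq[OF assms] by (simp add: mult.commute)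
  finally have e: "powO al be ga x (2 * Suc k) = scaleO ((- N x)^Suc k) oneO" .
  have "powO al be ga x (2 * Suc k + 1) = M x (powO al be ga x (2 * Suc k))" by simp
  also have "\<dots> = scaleO ((- N x)^Suc k) x" by (subst e) (simp only: mul_sc_r mul_one_r)
  finally show ?case using e by blast
qed

lemma nil_iff: assumes "re x = 0" shows "nilpotentO al be ga x \<longleftrightarrow> N x = 0"
proof
  assume "N x = 0"
  then have "powO al be ga x (2*1) = 0" using pow_im[OF assms, of 1] by simp
  then show "nilpotentO al be ga x" unfolding nilpotentO_def by blast
next
  assume nil: "nilpotentO al be ga x"
  show "N x = 0"
  proof (rule ccontr)
    assume nz: "N x \<noteq> 0"
    have xnz: "x \<noteq> 0"
    proof
      assume "x = 0" then show False using nz by (simp add: N_zero)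
    qed
    obtain n where n: "powO al be ga x n = 0" using nil unfolding nilpotentO_def by blast
    obtain m where "n = 2 * m \<or> n = 2 * m + 1" by (rule that[of "n div 2"]) presburger
    then show False
    proof
      assume nm: "n = 2 * m"
      have "powO al be ga x (2 * m) = scaleO ((- N x)^m) oneO" using pow_im[OF assms] by blast
      then have "scaleO ((- N x)^m) oneO = 0" using n nm by simp
      then show False using nz one_nz by simp
    next
      assume nm: "n = 2 * m + 1"
      have "powO al be ga x (2 * m + 1) = scaleO ((- N x)^m) x" using pow_im[OF assms] by blast
      then have "scaleO ((- N x)^m) x = 0" using n nm by simp
      then show False using nz xnz by simp
    qed
  qed
qed

lemma span_sc: assumes "(a::'a::field) \<noteq> 0" shows "V.span {scaleO a p} = V.span {p}"
proof -
  have "x \<in> V.span {scaleO a p} \<longleftrightarrow> x \<in> V.span {p}" for x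
  proof
    assume "x \<in> V.span {scaleO a p}"
    then obtain k where "x = scaleO k (scaleO a p)" using span1 by blast
    then have "x = scaleO (k * a) p" by simp
    then show "x \<in> V.span {p}" unfolding span1 by blast
  next
    assume "x \<in> V.span {p}"
    then obtain k where k: "x = scaleO k p" using span1 by blast
    have "x = scaleO (k / a) (scaleO a p)" using assms k by simp
    then show "x \<in> V.span {scaleO a p}" unfolding span1 by blast
  qed
  then show ?thesis by blast
qed

lemma nil_line_span: assumes "p \<noteq> 0" "re p = 0" "N p = 0"
  shows "nil_line al be ga (V.span {p})"
  unfolding nil_line_def
proof (intro conjI ballI)
  show "V.subspace (V.span {p})" "V.dim (V.span {p}) = 1" using line_span[OF assms(1)] by simp_all
  fix x assume "x \<in> V.span {p}"
  then obtain k where k: "x = scaleO k p" using span1 by blast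
  have "re x = 0" "N x = 0" using assms k by (simp_all add: re_sc N_sc)
  then show "nilpotentO al be ga x" using nil_iff by blast
qed

lemma N_comb: "N (scaleO a p + scaleO b q) = a^2 * N p + b^2 * N q + a * b * B p q"
  by (simp add: N_add N_sc B_add B_sc B_sc_r power2_eq_square algebra_simps)

lemma nil_lines_sub: assumes two: "(2::'a) \<noteq> 0" and L: "L \<in> nil_lines_in al be ga U" and U: "U \<subseteq> imO"
  shows "\<exists>v. v \<noteq> 0 \<and> L = V.span {v} \<and> v \<in> U \<and> re v = 0 \<and> N v = 0"
proof -
  have nl: "nil_line al be ga L" and LU: "L \<subseteq> U" using L unfolding nil_lines_in_def by blast+
  obtain v where v: "v \<noteq> 0" "L = V.span {v}" using dim1 nl unfolding nil_line_def by blast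
  have vL: "v \<in> L" using v V.span_base by blast
  then have "v \<in> U" using LU by blast
  then have "v \<in> imO" using U by blast
  then have r: "re v = 0" using imO_iff[OF two] by blast
  have "nilpotentO al be ga v" using nl vL unfolding nil_line_def by blast
  then have "N v = 0" using nil_iff r by blast
  then show ?thesis using v r \<open>v \<in> U\<close> by blast
qed

lemma typeM_plane:
  assumes two: "(2::'a) \<noteq> 0" and p: "re p = 0" "N p = 0" and q: "re q = 0" "N q = 0"
    and b: "B p q \<noteq> 0"
  shows "typeM al be ga (V.span {p, q})"
proof -
  have pnz: "p \<noteq> 0"
  proof
    assume "p = 0" then show False using b by (simp add: B_zero)
  qed
  have qnz: "q \<noteq> 0"
  proof
    assume "q = 0" then show False using b by (simp add: B_zero_r)
  qed
  have Bpp: "B p p = 0" using p by (simp add: B_self)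
  have qp: "q \<notin> V.span {p}"
  proof
    assume "q \<in> V.span {p}"
    then obtain k where "q = scaleO k p" using span1 by blast
    then have "B p q = k * B p p" by (simp add: B_sc_r)
    then show False using b Bpp by simp
  qed
  have i1: "V.independent {p}" using pnz by (intro V.independent_insertI) (simp_all add: V.independent_empty)
  have ind: "V.independent {p, q}" using V.independent_insertI[OF qp i1] by (simp add: insert_commute)
  have qnp: "q \<noteq> p" using qp V.span_base by blast
  have sub: "V.span {p, q} \<subseteq> imO"
    using p q by (intro V.span_minimal subspace_imO[OF two]) (simp_all add: imO_iff[OF two])
  have plane: "plane_imO (V.span {p, q})"
    unfolding plane_imO_def using ind qnp sub V.dim_span_eq_card_independent[OF ind] by simp
  have nl: "nil_lines_in al be ga (V.span {p, q}) = {V.span {p}, V.span {q}}"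
  proof
    show "nil_lines_in al be ga (V.span {p, q}) \<subseteq> {V.span {p}, V.span {q}}"
    proof
      fix L assume L: "L \<in> nil_lines_in al be ga (V.span {p, q})"
      obtain v where v: "v \<noteq> 0" "L = V.span {v}" "v \<in> V.span {p, q}" "N v = 0"
        using nil_lines_sub[OF two L sub] by blast
      obtain a c where ac: "v = scaleO a p + scaleO c q" using v(3) span2 by blast
      have "a * c * B p q = 0" using v(4) ac p q by (simp add: N_comb)
      then have "a = 0 \<or> c = 0" using b by simp
      then show "L \<in> {V.span {p}, V.span {q}}"
      proof
        assume "a = 0" then have vc: "v = scaleO c q" using ac by simp
        have "c \<noteq> 0"
        proof
          assume "c = 0" then show False using v(1) vc by simp
        qed
        then show ?thesis using v(2) vc span_sc[of c q] by simp
      next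
        assume "c = 0" then have vc: "v = scaleO a p" using ac by simp
        have "a \<noteq> 0"
        proof
          assume "a = 0" then show False using v(1) vc by simp
        qed
        then show ?thesis using v(2) vc span_sc[of a p] by simp
      qed
    qed
    show "{V.span {p}, V.span {q}} \<subseteq> nil_lines_in al be ga (V.span {p, q})"
      unfolding nil_lines_in_def using nil_line_span[OF pnz p] nil_line_span[OF qnz q]
        V.span_mono[of "{p}" "{p,q}"] V.span_mono[of "{q}" "{p,q}"]
      by blast
  qed
  have "V.span {p} \<noteq> V.span {q}" using qp V.span_base by blast
  then have c2: "card {V.span {p}, V.span {q}} = 2" by (simp only: card_2_iff) blast
  show ?thesis unfolding typeM_def nl using plane c2 by blast
qed

lemma typeU_plane:
  assumes two: "(2::'a) \<noteq> 0" and p: "re p = 0" "N p = 0" "p \<noteq> 0"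
    and h: "re h = 0" "N h \<noteq> 0" "B p h = 0" "M p h \<in> V.span {p}" and pp: "M p p = 0"
  shows "typeU al be ga (V.span {p, h})"
proof -
  have hp: "h \<notin> V.span {p}"
  proof
    assume "h \<in> V.span {p}"
    then obtain k where "h = scaleO k p" using span1 by blast
    then show False using h(2) p by (simp add: N_sc)
  qed
  have i1: "V.independent {p}" using p by (intro V.independent_insertI) (simp_all add: V.independent_empty)
  have ind: "V.independent {p, h}" using V.independent_insertI[OF hp i1] by (simp add: insert_commute)
  have hnp: "h \<noteq> p" using hp V.span_base by blast
  have sub: "V.span {p, h} \<subseteq> imO"
    using p h by (intro V.span_minimal subspace_imO[OF two]) (simp_all add: imO_iff[OF two])
  have plane: "plane_imO (V.span {p, h})"
    unfolding plane_imO_def using ind hnp sub V.dim_span_eq_card_independent[OF ind] by simp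
  have nl: "nil_lines_in al be ga (V.span {p, h}) = {V.span {p}}"
  proof
    show "nil_lines_in al be ga (V.span {p, h}) \<subseteq> {V.span {p}}"
    proof
      fix L assume L: "L \<in> nil_lines_in al be ga (V.span {p, h})"
      obtain v where v: "v \<noteq> 0" "L = V.span {v}" "v \<in> V.span {p, h}" "N v = 0"
        using nil_lines_sub[OF two L sub] by blast
      obtain a c where ac: "v = scaleO a p + scaleO c h" using v(3) span2 by blast
      have "c^2 * N h = 0" using v(4) ac p h by (simp add: N_comb)
      then have "c = 0" using h(2) by simp
      then have vc: "v = scaleO a p" using ac by simp
      have "a \<noteq> 0"
        proof
          assume "a = 0" then show False using v(1) vc by simp
        qed
      then show "L \<in> {V.span {p}}" using v(2) vc span_sc[of a p] by simp
    qed
    show "{V.span {p}} \<subseteq> nil_lines_in al be ga (V.span {p, h})"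
      unfolding nil_lines_in_def using nil_line_span[OF p(3) p(1,2)] V.span_mono[of "{p}" "{p,h}"]
      by blast
  qed
  have mul: "M p v \<in> V.span {p}" if vin: "v \<in> V.span {p, h}" for v
  proof -
    obtain a c where ac: "v = scaleO a p + scaleO c h" using vin span2 by blast
    have "M p v = scaleO a (M p p) + scaleO c (M p h)" using ac by (simp add: mul_add_r mul_sc_r)
    also have "\<dots> = scaleO c (M p h)" using pp by simp
    finally have "M p v = scaleO c (M p h)" .
    then show ?thesis using V.span_scale[OF h(4), of c] by simp
  qed
  show ?thesis unfolding typeU_def
    by (intro conjI plane exI[of _ p]) (use nl mul p(3) in blast)+
qed


lemma nondeg: assumes nz: "al \<noteq> 0" "be \<noteq> 0" "ga \<noteq> 0" and two: "(2::'a) \<noteq> 0" and x: "x \<noteq> 0"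
  shows "\<exists>e. B x e \<noteq> 0"
proof (rule ccontr)
  assume "\<not> (\<exists>e. B x e \<noteq> 0)"
  then have all: "\<And>e. B x e = 0" by simp
  obtain a0 a1 a2 a3 a4 a5 a6 a7 where xe: "x = mk8 a0 a1 a2 a3 a4 a5 a6 a7" using mk8_ex by blast
  have c0: "B x (mk8 1 0 0 0 0 0 0 0) = 2 * a0" unfolding xe by (simp add: defs nO_def bO_def; algebra)
  have c1: "B x (mk8 0 1 0 0 0 0 0 0) = -2 * al * a1" unfolding xe by (simp add: defs nO_def bO_def; algebra)
  have c2: "B x (mk8 0 0 1 0 0 0 0 0) = -2 * be * a2" unfolding xe by (simp add: defs nO_def bO_def; algebra)
  have c3: "B x (mk8 0 0 0 1 0 0 0 0) = 2 * al * be * a3" unfolding xe by (simp add: defs nO_def bO_def; algebra)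
  have c4: "B x (mk8 0 0 0 0 1 0 0 0) = -2 * ga * a4" unfolding xe by (simp add: defs nO_def bO_def; algebra)
  have c5: "B x (mk8 0 0 0 0 0 1 0 0) = 2 * al * ga * a5" unfolding xe by (simp add: defs nO_def bO_def; algebra)
  have c6: "B x (mk8 0 0 0 0 0 0 1 0) = 2 * be * ga * a6" unfolding xe by (simp add: defs nO_def bO_def; algebra)
  have c7: "B x (mk8 0 0 0 0 0 0 0 1) = -2 * al * be * ga * a7" unfolding xe by (simp add: defs nO_def bO_def; algebra)
  have "a0 = 0" "a1 = 0" "a2 = 0" "a3 = 0" "a4 = 0" "a5 = 0" "a6 = 0" "a7 = 0"
    using c0 c1 c2 c3 c4 c5 c6 c7 all nz two by simp_all
  then have "x = 0" unfolding xe by (simp add: mk8_def zero_prod_def)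
  then show False using x by simp
qed

definition Ebas :: "'a cd3 set" where
  "Ebas = {mk8 1 0 0 0 0 0 0 0, mk8 0 1 0 0 0 0 0 0, mk8 0 0 1 0 0 0 0 0, mk8 0 0 0 1 0 0 0 0,
           mk8 0 0 0 0 1 0 0 0, mk8 0 0 0 0 0 1 0 0, mk8 0 0 0 0 0 0 1 0, mk8 0 0 0 0 0 0 0 1}"

lemma card_Ebas: "card Ebas = 8"
  unfolding Ebas_def by (simp add: mk8_def)

lemma orth_indep: assumes "\<And>a. a \<in> S \<Longrightarrow> B a a \<noteq> 0"
    "\<And>a b. a \<in> S \<Longrightarrow> b \<in> S \<Longrightarrow> a \<noteq> b \<Longrightarrow> B a b = 0"
  shows "V.independent S"
proof
  assume "V.dependent S"
  then have "\<exists>a\<in>S. a \<in> V.span (S - {a})" by (simp only: V.dependent_def)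
  then obtain a where a: "a \<in> S" "a \<in> V.span (S - {a})" by (rule bexE)
  have "\<forall>s\<in>S - {a}. B s a = 0"
  proof
    fix s assume "s \<in> S - {a}"
    then show "B s a = 0" using assms(2)[of s a] a(1) by simp
  qed
  then have "B a a = 0" using B_span_zero a(2) by simp
  then show False using assms(1)[OF a(1)] by simp
qed

lemma indep_Ebas: assumes nz: "al \<noteq> 0" "be \<noteq> 0" "ga \<noteq> 0" and two: "(2::'a) \<noteq> 0"
  shows "V.independent Ebas"
proof (rule orth_indep)
  fix a assume "a \<in> Ebas"
  then show "B a a \<noteq> 0" using nz two unfolding Ebas_def
    by (elim insertE emptyE) (simp_all add: mk8_def nO_def bO_def algebra_simps)
next
  fix a b assume "a \<in> Ebas" "b \<in> Ebas" "a \<noteq> b"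
  then show "B a b = 0" unfolding Ebas_def
    by (elim insertE emptyE) (simp_all add: mk8_def nO_def bO_def algebra_simps)
qed

lemma aniso_perp:
  assumes nz: "al \<noteq> 0" "be \<noteq> 0" "ga \<noteq> 0" and two: "(2::'a) \<noteq> 0"
    and fin: "finite Vs" and cVs: "card Vs < 8"
    and P1: "\<And>w v. v \<in> Vs \<Longrightarrow> B (P w) v = 0" and P2: "\<And>w. w - P w \<in> V.span Vs"
  shows "\<exists>z. (\<forall>v\<in>Vs. B z v = 0) \<and> N z \<noteq> 0"
proof -
  have "\<exists>w. P w \<noteq> 0"
  proof (rule ccontr)
    assume "\<not> (\<exists>w. P w \<noteq> 0)"
    then have P0: "P w = 0" for w by simp
    have allw: "w \<in> V.span Vs" for w using P2[of w] P0[of w] by simp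
    have "Ebas \<subseteq> V.span Vs" by (rule subsetI) (rule allw)
    then have "card Ebas \<le> card Vs" using V.independent_span_bound[OF fin indep_Ebas[OF nz two]] by simp
    then show False using cVs card_Ebas by simp
  qed
  then obtain w where w: "P w \<noteq> 0" by (elim exE)
  define z0 where "z0 = P w"
  have "z0 \<noteq> 0" using w z0_def by simp
  then obtain e where e: "B z0 e \<noteq> 0" using nondeg[OF nz two] by blast
  define z1 where "z1 = P e"
  have z0p: "\<And>v. v \<in> Vs \<Longrightarrow> B z0 v = 0" using P1 z0_def by simp
  have z1p: "\<And>v. v \<in> Vs \<Longrightarrow> B z1 v = 0" using P1 z1_def by simp
  have sz: "\<forall>s\<in>Vs. B s z0 = 0"
  proof
    fix s assume "s \<in> Vs" then show "B s z0 = 0" using z0p[of s] B_sym[of s z0] by simp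
  qed
  have "e - z1 \<in> V.span Vs" using P2[of e] z1_def by simp
  then have "B (e - z1) z0 = 0" by (rule B_span_zero[OF sz])
  then have "B e z0 - B z1 z0 = 0" by (simp add: B_diff)
  then have B01: "B z0 z1 = B z0 e" using B_sym[of z0 z1] B_sym[of z0 e] by simp
  show ?thesis
  proof (cases "N z0 = 0")
    case False then show ?thesis using z0p by (intro exI[of _ z0] conjI ballI) simp_all
  next
    case n0: True
    show ?thesis
    proof (cases "N z1 = 0")
      case False then show ?thesis using z1p by (intro exI[of _ z1] conjI ballI) simp_all
    next
      case True
      have "N (z0 + z1) = B z0 e" using n0 True B01 by (simp add: N_add)
      then show ?thesis using e z0p z1p by (intro exI[of _ "z0 + z1"] conjI ballI) (simp_all add: B_add)
    qed
  qed
qed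

lemma card2_lt: "card {a, b::'a cd3} < 8" by (simp add: card_insert_if)
lemma card4_lt: "card {a, b, c, d::'a cd3} < 8" by (simp add: card_insert_if)

lemma exists_p:
  assumes nz: "al \<noteq> 0" "be \<noteq> 0" "ga \<noteq> 0" and two: "(2::'a) \<noteq> 0"
    and split: "split_cayley al be ga"
  shows "\<exists>p. re p = 0 \<and> N p = 0 \<and> p \<noteq> 0"
proof -
  obtain x y where xy: "x \<noteq> 0" "y \<noteq> 0" "M x y = 0" using split unfolding split_cayley_def by blast
  have "scaleO (N x) y = 0" using I14[of x y] xy(3) by (simp add: mul_zero_r)
  then have Nx: "N x = 0" using xy(2) by simp
  show ?thesis
  proof (cases "re x = 0")
    case True then show ?thesis using Nx xy(1) by blast
  next
    case False
    define r where "r = re x"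
    define x' where "x' = x - scaleO r oneO"
    have rex': "re x' = 0" by (simp add: x'_def re_diff re_sc re_one r_def)
    have xx: "x = x' + scaleO r oneO" by (simp add: x'_def)
    have "N x = N x' + r * r" unfolding xx by (simp add: N_add N_sc N_one B_sc_r B_one rex' power2_eq_square)
    then have Nx': "N x' = - (r * r)" using Nx by (simp add: eq_neg_iff_add_eq_0)
    have rnz: "r \<noteq> 0" using False r_def by simp
    have Nx'nz: "N x' \<noteq> 0" using Nx' rnz by simp
    define P where "P w = w - scaleO (B w oneO / 2) oneO - scaleO (B w x' / (2 * N x')) x'" for w
    have B11: "B oneO oneO = 2" by (simp add: B_one re_one)
    have Bx1: "B x' oneO = 0" "B oneO x' = 0" by (simp_all add: B_one rex' B_sym[of oneO])
    have Bxx: "B x' x' = 2 * N x'" by (rule B_self)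
    have P1: "B (P w) v = 0" if v: "v \<in> {oneO, x'}" for w v
    proof -
      from v have "v = oneO \<or> v = x'" by simp
      then show ?thesis
      proof
        assume "v = oneO" then show ?thesis using two
          by (simp add: P_def B_diff B_sc B11 Bx1)
      next
        assume "v = x'" then show ?thesis using two Nx'nz
          by (simp add: P_def B_diff B_sc Bx1 Bxx)
      qed
    qed
    have P2: "w - P w \<in> V.span {oneO, x'}" for w
    proof -
      have "w - P w = scaleO (B w oneO / 2) oneO + scaleO (B w x' / (2 * N x')) x'"
        by (simp add: P_def)
      moreover have "oneO \<in> V.span {oneO, x'}" "x' \<in> V.span {oneO, x'}" by (simp_all add: V.span_base)
      ultimately show ?thesis by (simp add: V.span_add V.span_scale)
    qed
    obtain e where e: "\<forall>v\<in>{oneO, x'}. B e v = 0" "N e \<noteq> 0"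
      using aniso_perp[OF nz two _ card2_lt P1 P2] by blast
    have e1: "B e oneO = 0" "B e x' = 0" using e(1) by simp_all
    define p where "p = M x e"
    have "B p oneO = B e (conjO x)" by (simp add: p_def B_mul mul_one_r)
    also have "\<dots> = 0" unfolding conj_re xx
      by (simp add: B_diff_r B_sc_r B_add_r e1)
    finally have rp: "re p = 0" using two by (simp add: B_one)
    have Np: "N p = 0" by (simp add: p_def N_mul Nx)
    have "p \<noteq> 0"
    proof
      assume "p = 0"
      then have "scaleO (N e) x = 0" using I13[of x e] by (simp add: p_def mul_zero_l)
      then show False using e(2) xy(1) by simp
    qed
    then show ?thesis using rp Np by blast
  qed
qed

lemma exists_q:
  assumes nz: "al \<noteq> 0" "be \<noteq> 0" "ga \<noteq> 0" and two: "(2::'a) \<noteq> 0"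
    and p: "re p = 0" "N p = 0" "p \<noteq> 0"
  shows "\<exists>q. re q = 0 \<and> N q = 0 \<and> B p q \<noteq> 0"
proof -
  obtain e where e: "B p e \<noteq> 0" using nondeg[OF nz two p(3)] by blast
  define e' where "e' = e - scaleO (re e) oneO"
  have re': "re e' = 0" by (simp add: e'_def re_diff re_sc re_one)
  have Be': "B p e' = B p e" by (simp add: e'_def B_diff_r B_sc_r B_one p(1))
  have Be'2: "B e' p \<noteq> 0" using Be' e B_sym[of e' p] by simp
  define t where "t = - N e' / B e' p"
  define q where "q = e' + scaleO t p"
  have "N q = N e' + t * B e' p" by (simp add: q_def N_add N_sc p(2) B_sc_r)
  then have Nq: "N q = 0" using Be'2 by (simp add: t_def)
  have rq: "re q = 0" by (simp add: q_def re_add re_sc re' p(1))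
  have "B p q = B p e'" by (simp add: q_def B_add_r B_sc_r B_self p(2))
  then have "B p q \<noteq> 0" using Be' e by simp
  then show ?thesis using Nq rq by blast
qed


lemma config:
  assumes nz: "al \<noteq> 0" "be \<noteq> 0" "ga \<noteq> 0" and two: "(2::'a) \<noteq> 0"
    and p: "re p = 0" "N p = 0" "p \<noteq> 0" and q: "re q = 0" "N q = 0" "B p q \<noteq> 0"
    and hdef: "h = M p q - M q p"
  shows "re h = 0 \<and> N h \<noteq> 0 \<and> B p h = 0 \<and> M p h \<in> V.span {p} \<and> M p p = 0 \<and>
    (\<exists>q'. re q' = 0 \<and> N q' = 0 \<and> B p q' \<noteq> 0 \<and> h = M p q' - M q' p \<and>
       V.independent {q', oneO, h, q, p} \<and> card {q', oneO, h, q, p} = 5)"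
proof -
  define b where "b = B p q"
  have bnz: "b \<noteq> 0" using q(3) b_def by simp
  have Bpp: "B p p = 0" using p(2) by (simp add: B_self)
  have Bqq: "B q q = 0" using q(2) by (simp add: B_self)
  have Bqp: "B q p = b" using B_sym[of q p] b_def by simp
  have Bpq: "B p q = b" using b_def by simp
  have rh: "re h = 0" using comm_re[OF p(1) q(1)] hdef by simp
  have Nh: "N h = - (b * b)" using Nh[OF p(1) q(1)] p(2) q(2) hdef b_def by (simp add: power2_eq_square)
  have Nhnz: "N h \<noteq> 0" using Nh bnz by simp
  have Bph: "B p h = 0" using hdef p(1) q(1) by (simp add: B_diff_r B_x_mul B_x_mulr)
  have Bqh: "B q h = 0" using hdef p(1) q(1) by (simp add: B_diff_r B_x_mul B_x_mulr)
  have Bhp: "B h p = 0" using Bph B_sym[of h p] by simp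
  have Bhq: "B h q = 0" using Bqh B_sym[of h q] by simp
  have Bhh: "B h h = - 2 * (b * b)" using Nh by (simp add: B_self)
  have Bhhnz: "B h h \<noteq> 0" using Bhh bnz two by simp
  have B11: "B oneO oneO = 2" by (simp add: B_one re_one)
  have Bp1: "B p oneO = 0" "B oneO p = 0" using p(1) B_sym[of oneO p] by (simp_all add: B_one)
  have Bq1: "B q oneO = 0" "B oneO q = 0" using q(1) B_sym[of oneO q] by (simp_all add: B_one)
  have Bh1: "B h oneO = 0" "B oneO h = 0" using rh B_sym[of oneO h] by (simp_all add: B_one)
  have Mpp: "M p p = 0" using sq[OF p(1)] p(2) by simp
  have Mqq: "M q q = 0" using sq[OF q(1)] q(2) by simp
  have an: "M p q + M q p = scaleO (- b) oneO" using anti[OF p(1) q(1)] b_def by simp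
  have Mph: "M p h = scaleO b p"
  proof -
    have "M p h = M p (M p q) - M p (M q p)" using hdef by (simp add: mul_diff_r)
    also have "\<dots> = M (M p p) q - (scaleO (- B p q) p + scaleO (N p) q)"
      by (simp add: alt_l flex[OF p(1) q(1)])
    also have "\<dots> = scaleO b p" using Mpp p(2) b_def by (simp add: mul_zero_l)
    finally show ?thesis .
  qed
  have Mqh: "M q h = scaleO (- b) q"
  proof -
    have "M q h = M q (M p q) - M q (M q p)" using hdef by (simp add: mul_diff_r)
    also have "\<dots> = (scaleO (- B q p) q + scaleO (N q) p) - M (M q q) p"
      by (simp add: alt_l flex[OF q(1) p(1)])
    also have "\<dots> = scaleO (- b) q" using Mqq q(2) Bqp by (simp add: mul_zero_l)
    finally show ?thesis .
  qed
  have two_sc: "scaleO 2 y = y + y" for y :: "'a cd3"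
    using V.scale_left_distrib[of 1 1 y] by (simp add: one_add_one)
  have "scaleO 2 (M p q) = h + scaleO (- b) oneO"
    unfolding two_sc hdef an[symmetric] by (simp add: algebra_simps)
  then have Mpq: "M p q = scaleO (1/2) h + scaleO (- b / 2) oneO"
  proof -
    assume a: "scaleO 2 (M p q) = h + scaleO (- b) oneO"
    have "M p q = scaleO (1/2) (scaleO 2 (M p q))" using two by simp
    also have "\<dots> = scaleO (1/2) h + scaleO (- b / 2) oneO" unfolding a
      by (simp add: V.scale_right_distrib V.scale_right_diff_distrib)
    finally show ?thesis .
  qed
  have Mqp: "M q p = scaleO (- b) oneO - M p q" using an by (simp add: algebra_simps)
  define Vs where "Vs = {oneO, p, q, h}"
  have inVs: "oneO \<in> V.span Vs" "p \<in> V.span Vs" "q \<in> V.span Vs" "h \<in> V.span Vs"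
    unfolding Vs_def by (simp_all add: V.span_base)
  have MpqV: "M p q \<in> V.span Vs" unfolding Mpq using inVs by (simp add: V.span_add V.span_diff V.span_scale)
  have MpV: "M p v \<in> V.span Vs" if "v \<in> Vs" for v
  proof -
    from that have "v = oneO \<or> v = p \<or> v = q \<or> v = h" unfolding Vs_def by simp
    then show ?thesis using inVs MpqV
      by (elim disjE) (simp_all add: mul_one_r Mpp Mph V.span_zero V.span_scale)
  qed
  have MqV: "M q v \<in> V.span Vs" if "v \<in> Vs" for v
  proof -
    from that have "v = oneO \<or> v = p \<or> v = q \<or> v = h" unfolding Vs_def by simp
    then show ?thesis using inVs MpqV
      by (elim disjE) (simp_all add: mul_one_r Mqq Mqh Mqp V.span_zero V.span_scale V.span_diff V.span_neg)
  qed
  define P where "P w = w - scaleO (B w oneO / 2) oneO - scaleO (B w h / B h h) h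
     - scaleO (B w q / b) p - scaleO (B w p / b) q" for w
  have P1: "B (P w) v = 0" if v: "v \<in> Vs" for w v
  proof -
    from v have "v = oneO \<or> v = p \<or> v = q \<or> v = h" unfolding Vs_def by simp
    then show ?thesis using two bnz Bhhnz
      by (elim disjE) (simp_all add: P_def B_diff B_sc B11 Bp1 Bq1 Bh1 Bpp Bqq Bqp Bpq Bph Bqh Bhp Bhq)
  qed
  have P2: "w - P w \<in> V.span Vs" for w
  proof -
    have "w - P w = scaleO (B w oneO / 2) oneO + scaleO (B w h / B h h) h
     + scaleO (B w q / b) p + scaleO (B w p / b) q" by (simp add: P_def algebra_simps)
    then show ?thesis using inVs by (simp add: V.span_add V.span_scale)
  qed
  have finVs: "finite Vs" unfolding Vs_def by simp
  have cVs: "card Vs < 8" unfolding Vs_def by (rule card4_lt)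
  obtain z where z: "\<forall>v\<in>Vs. B z v = 0" "N z \<noteq> 0"
    using aniso_perp[OF nz two finVs cVs P1 P2] by blast
  have zs: "\<forall>s\<in>Vs. B s z = 0"
  proof
    fix s assume "s \<in> Vs" then show "B s z = 0" using z(1) B_sym[of s z] by simp
  qed
  have perp_mul: "B (M x z) v = 0" if x: "re x = 0" and xV: "\<And>v. v \<in> Vs \<Longrightarrow> M x v \<in> V.span Vs"
    and v: "v \<in> Vs" for x v
  proof -
    have "B (M x z) v = B z (M (conjO x) v)" by (rule B_mul)
    also have "\<dots> = - B z (M x v)" using conj_im[OF x] by (simp add: mul_neg_l B_neg_r)
    also have "B z (M x v) = B (M x v) z" by (rule B_sym)
    also have "\<dots> = 0" by (rule B_span_zero[OF zs xV[OF v]])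
    finally show ?thesis by simp
  qed
  define r where "r = M p z"
  have Brv: "B r v = 0" if "v \<in> Vs" for v unfolding r_def by (rule perp_mul[OF p(1) MpV that])
  have Bqzv: "B (M q z) v = 0" if "v \<in> Vs" for v by (rule perp_mul[OF q(1) MqV that])
  have "B r oneO = 0" using Brv Vs_def by simp
  then have rr: "re r = 0" using two by (simp add: B_one)
  have Brp: "B r p = 0" using Brv Vs_def by simp
  have Brq: "B r q = 0" using Brv Vs_def by simp
  have Mpr: "M p r = 0" unfolding r_def by (simp add: alt_l Mpp mul_zero_l)
  have "conjO (M p r) = M r p"
    by (simp add: conj_mul conj_im[OF rr] conj_im[OF p(1)] mul_neg_l mul_neg_r)
  then have Mrp: "M r p = 0" using Mpr by (simp add: conj_zero)
  have rnz: "r \<noteq> 0"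
  proof
    assume "r = 0"
    then have "scaleO (N z) p = 0" using I13[of p z] by (simp add: r_def mul_zero_l)
    then show False using z(2) p(3) by simp
  qed
  define t where "t = - N (q + r) / b"
  define q' where "q' = q + r + scaleO t p"
  have Bqrp: "B (q + r) p = b" by (simp add: B_add Bqp Brp)
  have "N q' = N (q + r) + t * b" unfolding q'_def
    by (simp add: N_add N_sc p(2) B_sc_r Bqrp)
  then have Nq': "N q' = 0" using bnz by (simp add: t_def)
  have rq': "re q' = 0" by (simp add: q'_def re_add re_sc q(1) rr p(1))
  have Bpr: "B p r = 0" using Brp B_sym[of p r] by simp
  have Bpq': "B p q' = b" by (simp add: q'_def B_add_r B_sc_r Bpq Bpr Bpp)
  have hq': "h = M p q' - M q' p"
    by (simp add: q'_def hdef mul_add_r mul_add_l mul_sc_r mul_sc_l Mpr Mrp Mpp)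
  have i1: "V.independent {p} \<and> p \<notin> {}"
    by (rule indep_step[of "{}" q]) (simp_all add: V.independent_empty Bpq bnz)
  have i2: "V.independent {q, p} \<and> q \<notin> {p}"
    by (rule indep_step[of "{p}" p]) (simp_all add: i1 Bpp Bqp bnz p(3))
  have i3: "V.independent {h, q, p} \<and> h \<notin> {q, p}"
    by (rule indep_step[of "{q, p}" h]) (simp_all add: i2 Bqh Bph Bhhnz)
  have i4: "V.independent {oneO, h, q, p} \<and> oneO \<notin> {h, q, p}"
    by (rule indep_step[of "{h, q, p}" oneO]) (simp_all add: i3 Bh1 Bq1 Bp1 B11 two)
  have Bsqz: "\<forall>s\<in>{oneO, h, q, p}. B s (M q z) = 0"
  proof
    fix s assume "s \<in> {oneO, h, q, p}"
    then have "s \<in> Vs" unfolding Vs_def by blast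
    then show "B s (M q z) = 0" using Bqzv[of s] B_sym[of s "M q z"] by simp
  qed
  have "B q' (M q z) = B q (M q z) + B r (M q z) + t * B p (M q z)"
    by (simp add: q'_def B_add B_sc)
  also have "\<dots> = B (M p z) (M q z)" using Bsqz by (simp add: r_def)
  also have "\<dots> = N z * b" by (simp add: B_mulr Bpq)
  finally have Bq'w: "B q' (M q z) \<noteq> 0" using z(2) bnz by simp
  have i5: "V.independent {q', oneO, h, q, p} \<and> q' \<notin> {oneO, h, q, p}"
    by (rule indep_step[OF conjunct1[OF i4] Bsqz Bq'w])
  have card5: "card {q', oneO, h, q, p} = 5"
    using i1 i2 i3 i4 i5 by (simp add: card_insert_if)
  have "M p h \<in> V.span {p}" unfolding Mph by (simp add: V.span_scale V.span_base)
  then show ?thesis using rh Nhnz Bph Mpp rq' Nq' Bpq' bnz hq' i5 card5 by blast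
qed


lemma main_ctx:
  assumes char: "(2::'a) \<noteq> 0" and nz: "al \<noteq> 0" "be \<noteq> 0" "ga \<noteq> 0"
    and split: "split_cayley al be ga" and H: "\<forall>H\<in>HH. assoc_subalg4 al be ga H"
  shows "((\<exists>U. typeM al be ga U \<and> (\<forall>B\<in>imH ` HH. \<not> U \<subseteq> B)) \<or>
          (\<exists>U. typeU al be ga U \<and>
             (\<exists>B1\<in>imH ` HH. \<exists>B2\<in>imH ` HH. B1 \<noteq> B2 \<and> U \<subseteq> B1 \<and> U \<subseteq> B2)))
         \<and> \<not> subspace_design_2_3_1 imO (imH ` HH)"
proof -
  obtain p where p: "re p = 0" "N p = 0" "p \<noteq> 0" using exists_p[OF nz char split] by blast
  obtain q where q: "re q = 0" "N q = 0" "B p q \<noteq> 0" using exists_q[OF nz char p] by blast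
  define h where "h = M p q - M q p"
  note cfg = config[OF nz char p q h_def]
  have cf: "re h = 0" "N h \<noteq> 0" "B p h = 0" "M p h \<in> V.span {p}" "M p p = 0"
    using cfg by simp_all
  from cfg obtain q' where q': "re q' = 0" "N q' = 0" "B p q' \<noteq> 0" "h = M p q' - M q' p"
      "V.independent {q', oneO, h, q, p}" "card {q', oneO, h, q, p} = 5"
    by blast
  have tM1: "typeM al be ga (V.span {p, q})" by (rule typeM_plane[OF char p(1,2) q])
  have tM2: "typeM al be ga (V.span {p, q'})" by (rule typeM_plane[OF char p(1,2) q'(1,2,3)])
  have tU: "typeU al be ga (V.span {p, h})" by (rule typeU_plane[OF char p cf(1,2,3,4,5)])
  have imsub: "V.subspace (imH H)" if "H \<in> HH" for H
  proof -
    have "V.subspace H" using H that unfolding assoc_subalg4_def by simp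
    then show ?thesis unfolding imH_def by (rule V.subspace_inter[OF _ subspace_imO[OF char]])
  qed
  have key: "V.span {p, h} \<subseteq> imH H"
    if sub: "V.span {p, x} \<subseteq> imH H" and HH: "H \<in> HH" and hx: "h = M p x - M x p" for H x
  proof -
    have a: "assoc_subalg4 al be ga H" using H HH by simp
    have "p \<in> V.span {p, x}" "x \<in> V.span {p, x}" by (simp_all add: V.span_base)
    then have pxi: "p \<in> imH H" "x \<in> imH H" using sub by (simp_all add: subsetD)
    then have px: "p \<in> H" "x \<in> H" by (simp_all add: imH_def)
    have "M p x \<in> H" "M x p \<in> H" "V.subspace H" using a px unfolding assoc_subalg4_def by simp_all
    then have "h \<in> H" using hx V.subspace_diff by simp
    moreover have "h \<in> imO" using cf(1) imO_iff[OF char] by simp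
    ultimately have hi: "h \<in> imH H" by (simp add: imH_def)
    have "{p, h} \<subseteq> imH H" using pxi hi by simp
    then show ?thesis using imsub[OF HH] by (rule V.span_minimal)
  qed
  have notin: "\<forall>B\<in>imH ` HH. \<not> V.span {p, x} \<subseteq> B"
    if nex: "\<not> (\<exists>H\<in>HH. V.span {p, x} \<subseteq> imH H)" for x
  proof
    fix Bk assume "Bk \<in> imH ` HH"
    then obtain H where H1: "Bk = imH H" "H \<in> HH" by (rule imageE)
    show "\<not> V.span {p, x} \<subseteq> Bk"
    proof
      assume "V.span {p, x} \<subseteq> Bk"
      then have "\<exists>H\<in>HH. V.span {p, x} \<subseteq> imH H" using H1 by (intro bexI[of _ H]) simp_all
      then show False using nex by simp
    qed
  qed
  have D: "(\<exists>U. typeM al be ga U \<and> (\<forall>B\<in>imH ` HH. \<not> U \<subseteq> B)) \<or>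
          (\<exists>U. typeU al be ga U \<and>
             (\<exists>B1\<in>imH ` HH. \<exists>B2\<in>imH ` HH. B1 \<noteq> B2 \<and> U \<subseteq> B1 \<and> U \<subseteq> B2))"
  proof (cases "\<exists>H\<in>HH. V.span {p, q} \<subseteq> imH H")
    case False
    show ?thesis using tM1 notin[OF False] by (intro disjI1 exI[of _ "V.span {p, q}"] conjI)
  next
    case True
    then obtain H1 where H1: "H1 \<in> HH" "V.span {p, q} \<subseteq> imH H1" by (rule bexE)
    show ?thesis
    proof (cases "\<exists>H\<in>HH. V.span {p, q'} \<subseteq> imH H")
      case False
      show ?thesis using tM2 notin[OF False] by (intro disjI1 exI[of _ "V.span {p, q'}"] conjI)
    next
      case True
      then obtain H2 where H2: "H2 \<in> HH" "V.span {p, q'} \<subseteq> imH H2" by (rule bexE)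
      have U1: "V.span {p, h} \<subseteq> imH H1" by (rule key[OF H1(2) H1(1) h_def])
      have U2: "V.span {p, h} \<subseteq> imH H2" by (rule key[OF H2(2) H2(1) q'(4)])
      have ne: "imH H1 \<noteq> imH H2"
      proof
        assume eq: "imH H1 = imH H2"
        have a1: "assoc_subalg4 al be ga H1" using H H1(1) by simp
        have "q' \<in> V.span {p, q'}" by (simp add: V.span_base)
        then have "q' \<in> imH H1" using H2(2) eq by (simp add: subsetD)
        moreover have "q \<in> V.span {p, q}" "p \<in> V.span {p, q}" by (simp_all add: V.span_base)
        then have "q \<in> imH H1" "p \<in> imH H1" using H1(2) by (simp_all add: subsetD)
        moreover have "h \<in> V.span {p, h}" by (simp add: V.span_base)
        then have "h \<in> imH H1" using U1 by (simp add: subsetD)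
        ultimately have "q' \<in> H1" "q \<in> H1" "p \<in> H1" "h \<in> H1" by (simp_all add: imH_def)
        moreover have "oneO \<in> H1" using a1 unfolding assoc_subalg4_def by simp
        ultimately have "{q', oneO, h, q, p} \<subseteq> H1" by simp
        then have Ssub: "{q', oneO, h, q, p} \<subseteq> H1" .
        obtain Bs where Bs: "Bs \<subseteq> H1" "V.independent Bs" "H1 \<subseteq> V.span Bs" "card Bs = V.dim H1"
          by (rule V.basis_exists)
        have "V.dim H1 = 4" using a1 unfolding assoc_subalg4_def by simp
        then have cB: "card Bs = 4" using Bs(4) by simp
        then have fB: "finite Bs" by (simp add: card_ge_0_finite)
        have "{q', oneO, h, q, p} \<subseteq> V.span Bs" using Ssub Bs(3) by (rule order.trans)
        then have "card {q', oneO, h, q, p} \<le> card Bs"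
          using V.independent_span_bound[OF fB q'(5)] by simp
        then show False using q'(6) cB by simp
      qed
      have "\<exists>B1\<in>imH ` HH. \<exists>B2\<in>imH ` HH. B1 \<noteq> B2 \<and> V.span {p, h} \<subseteq> B1 \<and> V.span {p, h} \<subseteq> B2"
        using H1(1) H2(1) ne U1 U2 by (intro bexI[of _ "imH H1"] bexI[of _ "imH H2"] conjI) simp_all
      then show ?thesis using tU by (intro disjI2 exI[of _ "V.span {p, h}"] conjI)
    qed
  qed
  have ND: "\<not> subspace_design_2_3_1 imO (imH ` HH)"
  proof
    assume des: "subspace_design_2_3_1 imO (imH ` HH)"
    have all: "\<forall>U. V.subspace U \<and> V.dim U = 2 \<and> U \<subseteq> imO \<longrightarrow> (\<exists>!B. B \<in> imH ` HH \<and> U \<subseteq> B)"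
      using des unfolding subspace_design_2_3_1_def by (rule conjunct2)
    have uniq: "\<exists>!B. B \<in> imH ` HH \<and> U \<subseteq> B" if "plane_imO U" for U
      using all that unfolding plane_imO_def by simp
    from D show False
    proof
      assume "\<exists>U. typeM al be ga U \<and> (\<forall>B\<in>imH ` HH. \<not> U \<subseteq> B)"
      then obtain U where U: "typeM al be ga U" "\<forall>B\<in>imH ` HH. \<not> U \<subseteq> B" by blast
      then have "plane_imO U" by (simp add: typeM_def)
      then have "\<exists>!B. B \<in> imH ` HH \<and> U \<subseteq> B" by (rule uniq)
      then have "\<exists>B. B \<in> imH ` HH \<and> U \<subseteq> B" by (rule ex1_implies_ex)
      then obtain Bk where "Bk \<in> imH ` HH" "U \<subseteq> Bk" by blast
      then show False using U(2) by simp
    next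
      assume "\<exists>U. typeU al be ga U \<and>
             (\<exists>B1\<in>imH ` HH. \<exists>B2\<in>imH ` HH. B1 \<noteq> B2 \<and> U \<subseteq> B1 \<and> U \<subseteq> B2)"
      then obtain U B1 B2 where U: "typeU al be ga U" "B1 \<in> imH ` HH" "B2 \<in> imH ` HH" "B1 \<noteq> B2"
        "U \<subseteq> B1" "U \<subseteq> B2" by blast
      then have "plane_imO U" by (simp add: typeU_def)
      then have u: "\<exists>!B. B \<in> imH ` HH \<and> U \<subseteq> B" by (rule uniq)
      then obtain c where c: "\<And>y. y \<in> imH ` HH \<and> U \<subseteq> y \<Longrightarrow> y = c" by (elim ex1E) blast
      have "B1 = c" using c[of B1] U(2,5) by simp
      moreover have "B2 = c" using c[of B2] U(3,6) by simp
      ultimately show False using U(4) by simp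
    qed
  qed
  show ?thesis using D ND by (rule conjI)
qed

end

theorem mainTheorem13:
  fixes \<alpha> \<beta> \<gamma> :: "'a::field"
    and \<HH> :: "'a cd3 set set"
  assumes char: "(2::'a) \<noteq> 0"
    and nz: "\<alpha> \<noteq> 0" "\<beta> \<noteq> 0" "\<gamma> \<noteq> 0"
    and split: "split_cayley \<alpha> \<beta> \<gamma>"
    and H: "\<forall>H\<in>\<HH>. assoc_subalg4 \<alpha> \<beta> \<gamma> H"
  shows "((\<exists>U. typeM \<alpha> \<beta> \<gamma> U \<and> (\<forall>B\<in>imH ` \<HH>. \<not> U \<subseteq> B)) \<or>
          (\<exists>U. typeU \<alpha> \<beta> \<gamma> U \<and>
             (\<exists>B1\<in>imH ` \<HH>. \<exists>B2\<in>imH ` \<HH>. B1 \<noteq> B2 \<and> U \<subseteq> B1 \<and> U \<subseteq> B2)))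
         \<and> \<not> subspace_design_2_3_1 imO (imH ` \<HH>)"
  by (rule main_ctx[OF char nz split H])

end
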